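(* Let $P=\{p_1,\dots,p_n\}\subset\mathbb{R}^d$, and let $1\le l\le k$ be integers. Let $P^{(l)}$ be the colored multiset obtained by taking, for each $i$, $l$ copies $p_i^1,\dots,p_i^l$ of $p_i$, all of color $i$. Then for any $\lambda\ge1$ and any $k$ points $\mathcal{C}=\{c_1,\dots,c_k\}\subset\mathbb{R}^d$: $\mathcal{C}$ is a $\lambda$-approximate solution of $(l,k)$-FMeans on $P$ if and only if $\mathcal{C}$, used as the $k$ centers, induces a $\lambda$-approximate solution of $k$-ChMeans on $P^{(l)}$.
   Context: Fault tolerant $k$-means, $(l,k)$-FMeans: find $k$ points $\mathcal{C}\subset\mathbb{R}^d$ minimizing $\frac1n\sum_{i=1}^n$ (sum of the squared distances from $p_i$ to its $l$ nearest points of $\mathcal{C}$); $\mathcal{C}$ is $\lambda$-approximate if its cost is at most $\lambda$ times the minimum. Chromatic $k$-means, $k$-ChMeans, on a colored multiset $Q$ of $N$ points: partition $Q$ into $k$ clusters with no two points of the same color in the same cluster, minimizing $\frac1N\sum_j\sum_{q\in S_j}\|q-m(S_j)\|^2$ ($m(S_j)$ the mean). The $k$-ChMeans cost induced by centers $c_1,\dots,c_k$ is the minimum, over all assignments of the points of $Q$ to centers such that no two points of the same color go to the same center, of $\frac1N\sum_{q}\|q-c_{\text{assigned}(q)}\|^2$; it induces a $\lambda$-approximate solution if this cost is at most $\lambda$ times the optimal $k$-ChMeans value of $Q$. *)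

theory Defs
  imports "HOL-Analysis.Analysis"
begin

text \<open>Input points p 0, ..., p (n-1); centers c 0, ..., c (k-1).\<close>

definition l_nearest_cost :: "nat \<Rightarrow> nat \<Rightarrow> (nat \<Rightarrow> 'a::real_normed_vector) \<Rightarrow> 'a \<Rightarrow> real" where
  "l_nearest_cost l k c x =
     Min {(\<Sum>j\<in>S. (dist x (c j))^2) | S. S \<subseteq> {..<k} \<and> card S = l}"

definition fmeans_cost :: "nat \<Rightarrow> nat \<Rightarrow> (nat \<Rightarrow> 'a::real_normed_vector) \<Rightarrow> nat \<Rightarrow> (nat \<Rightarrow> 'a) \<Rightarrow> real" where
  "fmeans_cost l k p n c = (1 / real n) * (\<Sum>i<n. l_nearest_cost l k c (p i))"

definition fmeans_opt :: "nat \<Rightarrow> nat \<Rightarrow> (nat \<Rightarrow> 'a::real_normed_vector) \<Rightarrow> nat \<Rightarrow> real" where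
  "fmeans_opt l k p n = Inf (range (fmeans_cost l k p n))"

definition fmeans_approx :: "real \<Rightarrow> nat \<Rightarrow> nat \<Rightarrow> (nat \<Rightarrow> 'a::real_normed_vector) \<Rightarrow> nat \<Rightarrow> (nat \<Rightarrow> 'a) \<Rightarrow> bool" where
  "fmeans_approx lam l k p n c \<longleftrightarrow> fmeans_cost l k p n c \<le> lam * fmeans_opt l k p n"

text \<open>A colored multiset is given by a finite index set I, a point map pt and a
  color map col (repeated points are distinct indices). A partition into k
  clusters (possibly empty) is an assignment sigma of indices to {..<k};
  it is chromatic if no two distinct indices of the same color share a cluster.\<close>

definition chromatic_assignment :: "'i set \<Rightarrow> ('i \<Rightarrow> 'c) \<Rightarrow> nat \<Rightarrow> ('i \<Rightarrow> nat) \<Rightarrow> bool" where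
  "chromatic_assignment I col k \<sigma> \<longleftrightarrow>
     (\<forall>x\<in>I. \<sigma> x < k) \<and>
     (\<forall>x\<in>I. \<forall>y\<in>I. x \<noteq> y \<and> \<sigma> x = \<sigma> y \<longrightarrow> col x \<noteq> col y)"

definition cluster_mean :: "('i \<Rightarrow> 'a::real_vector) \<Rightarrow> 'i set \<Rightarrow> 'a" where
  "cluster_mean pt S = (1 / real (card S)) *\<^sub>R (\<Sum>q\<in>S. pt q)"

definition chmeans_cost :: "'i set \<Rightarrow> ('i \<Rightarrow> 'a::real_normed_vector) \<Rightarrow> nat \<Rightarrow> ('i \<Rightarrow> nat) \<Rightarrow> real" where
  "chmeans_cost I pt k \<sigma> = (1 / real (card I)) *
     (\<Sum>j<k. \<Sum>q\<in>{q\<in>I. \<sigma> q = j}. (norm (pt q - cluster_mean pt {q\<in>I. \<sigma> q = j}))^2)"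

definition chmeans_opt :: "'i set \<Rightarrow> ('i \<Rightarrow> 'a::real_normed_vector) \<Rightarrow> ('i \<Rightarrow> 'c) \<Rightarrow> nat \<Rightarrow> real" where
  "chmeans_opt I pt col k = Inf {chmeans_cost I pt k \<sigma> | \<sigma>. chromatic_assignment I col k \<sigma>}"

definition chmeans_center_cost :: "'i set \<Rightarrow> ('i \<Rightarrow> 'a::real_normed_vector) \<Rightarrow> ('i \<Rightarrow> 'c) \<Rightarrow> nat \<Rightarrow> (nat \<Rightarrow> 'a) \<Rightarrow> real" where
  "chmeans_center_cost I pt col k c =
     Inf {(1 / real (card I)) * (\<Sum>q\<in>I. (dist (pt q) (c (\<sigma> q)))^2) | \<sigma>. chromatic_assignment I col k \<sigma>}"

definition chmeans_induces_approx :: "real \<Rightarrow> 'i set \<Rightarrow> ('i \<Rightarrow> 'a::real_normed_vector) \<Rightarrow> ('i \<Rightarrow> 'c) \<Rightarrow> nat \<Rightarrow> (nat \<Rightarrow> 'a) \<Rightarrow> bool" where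
  "chmeans_induces_approx lam I pt col k c \<longleftrightarrow>
     chmeans_center_cost I pt col k c \<le> lam * chmeans_opt I pt col k"

text \<open>Index (i,t): the t-th copy of p i, of color i.\<close>

definition copies_idx :: "nat \<Rightarrow> nat \<Rightarrow> (nat \<times> nat) set" where
  "copies_idx n l = {..<n} \<times> {..<l}"

definition copies_pt :: "(nat \<Rightarrow> 'a) \<Rightarrow> nat \<times> nat \<Rightarrow> 'a" where
  "copies_pt p q = p (fst q)"

definition copies_col :: "nat \<times> nat \<Rightarrow> nat" where
  "copies_col q = fst q"

end

theory Submission
  imports Defs
begin

lemma lnc_fin:
  "finite {(\<Sum>j\<in>S. (dist x (c j))^2) | S. S \<subseteq> {..<k::nat} \<and> card S = l}"
proof -
  have "{(\<Sum>j\<in>S. (dist x (c j))^2) | S. S \<subseteq> {..<k} \<and> card S = l}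
        = (\<lambda>S. \<Sum>j\<in>S. (dist x (c j))^2) ` {S. S \<subseteq> {..<k} \<and> card S = l}" by auto
  moreover have "finite {S. S \<subseteq> {..<k} \<and> card S = (l::nat)}"
    by (rule finite_subset[of _ "Pow {..<k}"]) auto
  ultimately show ?thesis by simp
qed

lemma lnc_le:
  assumes "S \<subseteq> {..<k}" "card S = l"
  shows "l_nearest_cost l k c x \<le> (\<Sum>j\<in>S. (dist x (c j))^2)"
  unfolding l_nearest_cost_def
  by (rule Min_le[OF lnc_fin]) (use assms in auto)

lemma lnc_attained:
  assumes "l \<le> k"
  shows "\<exists>S. S \<subseteq> {..<k} \<and> card S = l \<and> l_nearest_cost l k c x = (\<Sum>j\<in>S. (dist x (c j))^2)"
proof -
  have ne: "{(\<Sum>j\<in>S. (dist x (c j))^2) | S. S \<subseteq> {..<k} \<and> card S = l} \<noteq> {}"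
    using assms by (auto intro!: exI[of _ "{..<l}"])
  show ?thesis using Min_in[OF lnc_fin ne] unfolding l_nearest_cost_def by blast
qed

lemma lnc_nonneg:
  assumes "l \<le> k"
  shows "0 \<le> l_nearest_cost l k c x"
  using lnc_attained[OF assms, of c x] by (auto intro!: sum_nonneg)

lemma card_copies: "card (copies_idx n l) = n * l"
  unfolding copies_idx_def by (simp add: card_cartesian_product)

lemma finite_copies: "finite (copies_idx n l)"
  unfolding copies_idx_def by simp

lemma lower_chrom:
  assumes "chromatic_assignment (copies_idx n l) copies_col k \<sigma>"
  shows "(\<Sum>i<n. l_nearest_cost l k c (p i))
     \<le> (\<Sum>q\<in>copies_idx n l. (dist (copies_pt p q) (c (\<sigma> q)))^2)"
proof -
  have "(\<Sum>q\<in>copies_idx n l. (dist (copies_pt p q) (c (\<sigma> q)))^2)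
      = (\<Sum>i<n. \<Sum>t<l. (dist (p i) (c (\<sigma> (i,t))))^2)"
    unfolding copies_idx_def copies_pt_def by (simp add: sum.cartesian_product split_def)
  moreover have "l_nearest_cost l k c (p i) \<le> (\<Sum>t<l. (dist (p i) (c (\<sigma> (i,t))))^2)"
    if i: "i < n" for i
  proof -
    have inj: "inj_on (\<lambda>t. \<sigma> (i,t)) {..<l}"
      using assms i unfolding chromatic_assignment_def copies_idx_def copies_col_def inj_on_def
      by fastforce
    have sub: "(\<lambda>t. \<sigma> (i,t)) ` {..<l} \<subseteq> {..<k}"
      using assms i unfolding chromatic_assignment_def copies_idx_def by auto
    have "(\<Sum>t<l. (dist (p i) (c (\<sigma> (i,t))))^2)
        = (\<Sum>j\<in>(\<lambda>t. \<sigma> (i,t)) ` {..<l}. (dist (p i) (c j))^2)"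
      using sum.reindex[OF inj, of "\<lambda>j. (dist (p i) (c j))^2"] by simp
    moreover have "l_nearest_cost l k c (p i) \<le> \<dots>"
      by (rule lnc_le[OF sub]) (simp add: card_image[OF inj])
    ultimately show ?thesis by simp
  qed
  ultimately show ?thesis by (metis (mono_tags, lifting) sum_mono lessThan_iff)
qed

lemma attain_chrom:
  assumes "l \<le> k"
  shows "\<exists>\<sigma>. chromatic_assignment (copies_idx n l) copies_col k \<sigma> \<and>
     (\<Sum>q\<in>copies_idx n l. (dist (copies_pt p q) (c (\<sigma> q)))^2) = (\<Sum>i<n. l_nearest_cost l k c (p i))"
proof -
  have "\<forall>i. \<exists>S. S \<subseteq> {..<k} \<and> card S = l \<and> l_nearest_cost l k c (p i) = (\<Sum>j\<in>S. (dist (p i) (c j))^2)"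
    using lnc_attained[OF assms] by blast
  then obtain S where S: "\<And>i. S i \<subseteq> {..<k} \<and> card (S i) = l \<and>
      l_nearest_cost l k c (p i) = (\<Sum>j\<in>S i. (dist (p i) (c j))^2)" by metis
  have "\<forall>i. \<exists>h. bij_betw h {0..<l} (S i)"
  proof
    fix i
    have "finite (S i)" using S[of i] finite_subset by blast
    then show "\<exists>h. bij_betw h {0..<l} (S i)" using ex_bij_betw_nat_finite S[of i] by metis
  qed
  then obtain h where h: "\<And>i. bij_betw (h i) {..<l} (S i)" by (metis atLeast0LessThan)
  define \<sigma> where "\<sigma> q = h (fst q) (snd q)" for q
  have c1: "\<sigma> x < k" if "x \<in> copies_idx n l" for x
    using that h[of "fst x"] S[of "fst x"]
    unfolding \<sigma>_def copies_idx_def bij_betw_def by auto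
  have c2: "copies_col x \<noteq> copies_col y"
    if "x \<in> copies_idx n l" "y \<in> copies_idx n l" "x \<noteq> y" "\<sigma> x = \<sigma> y" for x y
  proof
    assume "copies_col x = copies_col y"
    moreover obtain a b a' b' where xy: "x = (a,b)" "y = (a',b')" by fastforce
    ultimately have "a = a'" "b < l" "b' < l" "h a b = h a b'" "b \<noteq> b'"
      using that unfolding \<sigma>_def copies_idx_def copies_col_def by auto
    then show False using h[of a] unfolding bij_betw_def inj_on_def by auto
  qed
  have chrom: "chromatic_assignment (copies_idx n l) copies_col k \<sigma>"
    unfolding chromatic_assignment_def using c1 c2 by blast
  have "(\<Sum>q\<in>copies_idx n l. (dist (copies_pt p q) (c (\<sigma> q)))^2)
      = (\<Sum>i<n. \<Sum>t<l. (dist (p i) (c (h i t)))^2)"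
    unfolding copies_idx_def copies_pt_def \<sigma>_def by (simp add: sum.cartesian_product split_def)
  also have "\<dots> = (\<Sum>i<n. l_nearest_cost l k c (p i))"
  proof (rule sum.cong[OF refl])
    fix i
    show "(\<Sum>t<l. (dist (p i) (c (h i t)))^2) = l_nearest_cost l k c (p i)"
      using sum.reindex_bij_betw[OF h[of i], of "\<lambda>j. (dist (p i) (c j))^2"] S[of i] by simp
  qed
  finally show ?thesis using chrom by blast
qed


lemma mean_min:
  fixes x :: "'i \<Rightarrow> 'a::real_inner"
  assumes fin: "finite S"
  shows "(\<Sum>q\<in>S. (norm (x q - cluster_mean x S))^2) \<le> (\<Sum>q\<in>S. (norm (x q - c))^2)"
proof (cases "S = {}")
  case True then show ?thesis by simp
next
  case False
  define m where "m = cluster_mean x S"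
  have cS: "card S > 0" using False fin by (simp add: card_gt_0_iff)
  have "(\<Sum>q\<in>S. x q - m) = (\<Sum>q\<in>S. x q) - real (card S) *\<^sub>R m"
    by (simp add: sum_subtractf sum_constant_scaleR)
  also have "real (card S) *\<^sub>R m = (\<Sum>q\<in>S. x q)"
    using cS unfolding m_def cluster_mean_def by simp
  finally have s0: "(\<Sum>q\<in>S. x q - m) = 0" by simp
  have eq: "(norm (x q - c))^2 = (norm (x q - m))^2 + 2 * inner (x q - m) (m - c) + (norm (m - c))^2" for q
  proof -
    have "x q - c = (x q - m) + (m - c)" by simp
    then have "(norm (x q - c))^2 = inner ((x q - m) + (m - c)) ((x q - m) + (m - c))"
      by (simp add: power2_norm_eq_inner)
    also have "\<dots> = (norm (x q - m))^2 + 2 * inner (x q - m) (m - c) + (norm (m - c))^2"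
      by (simp only: inner_add_left inner_add_right power2_norm_eq_inner) (simp add: inner_commute)
    finally show ?thesis .
  qed
  have "(\<Sum>q\<in>S. (norm (x q - c))^2) = (\<Sum>q\<in>S. (norm (x q - m))^2) + 2 * inner (\<Sum>q\<in>S. x q - m) (m - c)
      + (\<Sum>q\<in>S. (norm (m - c))^2)"
    by (simp add: eq sum.distrib sum_distrib_left inner_sum_left)
  also have "\<dots> \<ge> (\<Sum>q\<in>S. (norm (x q - m))^2)" using s0 by (simp add: sum_nonneg)
  finally show ?thesis unfolding m_def by simp
qed

lemma ch_decomp:
  fixes k :: nat
  assumes "finite I" "\<forall>q\<in>I. \<sigma> q < k"
  shows "(\<Sum>q\<in>I. g q (\<sigma> q)) = (\<Sum>j<k. \<Sum>q\<in>{q\<in>I. \<sigma> q = j}. g q j)"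
proof -
  have "\<sigma> ` I \<subseteq> {..<k}" using assms(2) by auto
  from sum.group[OF assms(1) finite_lessThan this, of "\<lambda>q. g q (\<sigma> q)"] show ?thesis
    by simp
qed

lemma chcost_eq:
  fixes pt :: "'i \<Rightarrow> 'a::real_inner"
  assumes "finite I" "\<forall>q\<in>I. \<sigma> q < k"
  shows "chmeans_cost I pt k \<sigma> = (1 / real (card I)) *
     (\<Sum>q\<in>I. (dist (pt q) (cluster_mean pt {q'\<in>I. \<sigma> q' = \<sigma> q}))^2)"
  unfolding chmeans_cost_def
  using ch_decomp[OF assms, of "\<lambda>q j. (dist (pt q) (cluster_mean pt {q'\<in>I. \<sigma> q' = j}))^2"]
  by (simp add: dist_norm)

lemma chcost_le:
  fixes pt :: "'i \<Rightarrow> 'a::real_inner"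
  assumes "finite I" "\<forall>q\<in>I. \<sigma> q < k"
  shows "chmeans_cost I pt k \<sigma> \<le> (1 / real (card I)) * (\<Sum>q\<in>I. (dist (pt q) (c (\<sigma> q)))^2)"
proof -
  have "(\<Sum>j<k. \<Sum>q\<in>{q\<in>I. \<sigma> q = j}. (norm (pt q - cluster_mean pt {q\<in>I. \<sigma> q = j}))^2)
      \<le> (\<Sum>j<k. \<Sum>q\<in>{q\<in>I. \<sigma> q = j}. (norm (pt q - c j))^2)"
    by (intro sum_mono mean_min) (use assms in auto)
  also have "\<dots> = (\<Sum>q\<in>I. (dist (pt q) (c (\<sigma> q)))^2)"
    using ch_decomp[OF assms, of "\<lambda>q j. (norm (pt q - c j))^2"] by (simp add: dist_norm)
  finally show ?thesis unfolding chmeans_cost_def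
    by (intro mult_left_mono) auto
qed

lemma chcost_nonneg: "0 \<le> chmeans_cost I pt k \<sigma>"
  unfolding chmeans_cost_def by (intro mult_nonneg_nonneg sum_nonneg) auto

lemma fcost_nonneg: "l \<le> k \<Longrightarrow> 0 \<le> fmeans_cost l k p n c"
  unfolding fmeans_cost_def by (intro mult_nonneg_nonneg sum_nonneg lnc_nonneg) auto

lemma chrom_exists:
  assumes "l \<le> k"
  shows "chromatic_assignment (copies_idx n l) copies_col k snd"
  using assms unfolding chromatic_assignment_def copies_idx_def copies_col_def
  by (auto simp: prod_eq_iff)

theorem lemma9:
  fixes p :: "nat \<Rightarrow> 'a::euclidean_space" and n l k :: nat
    and lam :: real and c :: "nat \<Rightarrow> 'a"
  assumes "1 \<le> l" and "l \<le> k" and "lam \<ge> 1"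
  shows "fmeans_approx lam l k p n c \<longleftrightarrow>
         chmeans_induces_approx lam (copies_idx n l) (copies_pt p) copies_col k c"
proof -
  define I where "I = copies_idx n l"
  define F where "F c' = (\<Sum>i<n. l_nearest_cost l k c' (p i))" for c'
  have lpos: "real l > 0" using assms by simp
  have fc: "fmeans_cost l k p n c' = (1 / real n) * F c'" for c'
    unfolding fmeans_cost_def F_def by simp
  have rel: "(1 / real (card I)) * F c' = fmeans_cost l k p n c' / real l" for c'
    unfolding fc I_def card_copies by (cases "n = 0") (auto simp: field_simps)
  have finI: "finite I" unfolding I_def by (rule finite_copies)
  have ltk: "\<forall>q\<in>I. \<sigma> q < k" if "chromatic_assignment I copies_col k \<sigma>" for \<sigma>
    using that unfolding chromatic_assignment_def by auto
  have center: "chmeans_center_cost I (copies_pt p) copies_col k c' = fmeans_cost l k p n c' / real l" for c'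
  proof -
    obtain \<sigma> where s: "chromatic_assignment I copies_col k \<sigma>"
      "(\<Sum>q\<in>I. (dist (copies_pt p q) (c' (\<sigma> q)))^2) = F c'"
      using attain_chrom[OF assms(2), of n p c'] unfolding I_def F_def by blast
    have "chmeans_center_cost I (copies_pt p) copies_col k c' = (1 / real (card I)) * F c'"
      unfolding chmeans_center_cost_def
    proof (rule cInf_eq_minimum)
      show "(1 / real (card I)) * F c' \<in> {(1 / real (card I)) * (\<Sum>q\<in>I. (dist (copies_pt p q) (c' (\<sigma> q)))^2) | \<sigma>.
             chromatic_assignment I copies_col k \<sigma>}"
        using s by (auto intro!: exI[of _ \<sigma>])
    next
      fix x assume "x \<in> {(1 / real (card I)) * (\<Sum>q\<in>I. (dist (copies_pt p q) (c' (\<sigma> q)))^2) | \<sigma>.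
             chromatic_assignment I copies_col k \<sigma>}"
      then obtain \<tau> where t: "chromatic_assignment I copies_col k \<tau>"
        "x = (1 / real (card I)) * (\<Sum>q\<in>I. (dist (copies_pt p q) (c' (\<tau> q)))^2)" by blast
      have "F c' \<le> (\<Sum>q\<in>I. (dist (copies_pt p q) (c' (\<tau> q)))^2)"
        using lower_chrom[of n l k \<tau> c' p] t(1) unfolding I_def F_def by simp
      then show "(1 / real (card I)) * F c' \<le> x" unfolding t(2)
        by (intro mult_left_mono) auto
    qed
    then show ?thesis using rel by simp
  qed
  define CS where "CS = {chmeans_cost I (copies_pt p) k \<sigma> | \<sigma>. chromatic_assignment I copies_col k \<sigma>}"
  have CSne: "CS \<noteq> {}" unfolding CS_def using chrom_exists[OF assms(2), of n] I_def by blast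
  have CSbdd: "bdd_below CS" unfolding CS_def bdd_below_def using chcost_nonneg by blast
  have fbdd: "bdd_below (range (fmeans_cost l k p n))"
    unfolding bdd_below_def using fcost_nonneg[OF assms(2)] by blast
  have opt1: "fmeans_opt l k p n / real l \<le> chmeans_opt I (copies_pt p) copies_col k"
    unfolding chmeans_opt_def CS_def[symmetric]
  proof (rule cInf_greatest[OF CSne])
    fix x assume "x \<in> CS"
    then obtain \<sigma> where s: "chromatic_assignment I copies_col k \<sigma>" "x = chmeans_cost I (copies_pt p) k \<sigma>"
      unfolding CS_def by blast
    define m where "m j = cluster_mean (copies_pt p) {q'\<in>I. \<sigma> q' = j}" for j
    have "x = (1 / real (card I)) * (\<Sum>q\<in>I. (dist (copies_pt p q) (m (\<sigma> q)))^2)"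
      using chcost_eq[OF finI ltk[OF s(1)], of "copies_pt p"] s(2) unfolding m_def by simp
    moreover have "F m \<le> (\<Sum>q\<in>I. (dist (copies_pt p q) (m (\<sigma> q)))^2)"
      using lower_chrom[of n l k \<sigma> m p] s(1) unfolding I_def F_def by simp
    ultimately have "(1 / real (card I)) * F m \<le> x" by (simp add: divide_right_mono)
    then have "fmeans_cost l k p n m / real l \<le> x" using rel by simp
    moreover have "fmeans_opt l k p n \<le> fmeans_cost l k p n m"
      unfolding fmeans_opt_def by (rule cInf_lower[OF _ fbdd]) simp
    ultimately show "fmeans_opt l k p n / real l \<le> x"
      using lpos by (meson divide_right_mono less_imp_le order_trans)
  qed
  have "real l * chmeans_opt I (copies_pt p) copies_col k \<le> fmeans_opt l k p n"
    unfolding fmeans_opt_def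
  proof (rule cInf_greatest)
    show "range (fmeans_cost l k p n) \<noteq> {}" by simp
  next
    fix x assume "x \<in> range (fmeans_cost l k p n)"
    then obtain c' where x: "x = fmeans_cost l k p n c'" by blast
    obtain \<sigma> where s: "chromatic_assignment I copies_col k \<sigma>"
      "(\<Sum>q\<in>I. (dist (copies_pt p q) (c' (\<sigma> q)))^2) = F c'"
      using attain_chrom[OF assms(2), of n p c'] unfolding I_def F_def by blast
    have "chmeans_opt I (copies_pt p) copies_col k \<le> chmeans_cost I (copies_pt p) k \<sigma>"
      unfolding chmeans_opt_def CS_def[symmetric]
      by (rule cInf_lower[OF _ CSbdd]) (use s(1) CS_def in blast)
    also have "\<dots> \<le> (1 / real (card I)) * F c'"
      using chcost_le[OF finI ltk[OF s(1)], of "copies_pt p" c'] s(2) by simp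
    also have "\<dots> = x / real l" using rel x by simp
    finally show "real l * chmeans_opt I (copies_pt p) copies_col k \<le> x"
      using lpos by (simp add: field_simps)
  qed
  then have opt: "chmeans_opt I (copies_pt p) copies_col k = fmeans_opt l k p n / real l"
    using opt1 lpos by (simp add: field_simps)
  show ?thesis
    unfolding fmeans_approx_def chmeans_induces_approx_def I_def[symmetric] center opt
    using lpos by (simp add: field_simps)
qed

end
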